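(* Let $k\ge 4$ be an integer and let $C$ be a circular ordering of the vertex set of the path $P_k$. Then $(P_k,C)$ is $LF$-free if and only if it is a $k$-zigzag.
   Context: A circular ordering of a finite set is obtained by placing its elements at distinct points of a circle. A circularly ordered graph is a graph with a circular ordering of its vertices; isomorphism means a graph isomorphism preserving circular orderings; induced circularly ordered subgraphs are induced subgraphs with the restricted ordering. $LF$ consists of the following circularly ordered graphs (vertices $v_1,v_2,\dots$ clockwise in this order; listed edges are all edges): the triangle on $v_1,v_2,v_3$; on $v_1,\dots,v_4$: edges $v_1v_2,v_2v_3,v_3v_4,v_4v_1$; edges $v_1v_2,v_2v_4,v_4v_3,v_3v_1$; edges $v_1v_2,v_2v_3,v_3v_4$; edges $v_3v_1,v_1v_4,v_4v_2$; edges $v_3v_1,v_3v_2,v_3v_4$. $(P_k,C)$ is $LF$-free if it has no induced circularly ordered subgraph isomorphic to a member of $LF$. Let $Z$ be the circularly ordered graph on $v_1,\dots,v_4$ (clockwise) with edges $v_1v_2,v_2v_4,v_4v_3$, and $Z^\ast$ the one with edges $v_2v_1,v_1v_3,v_3v_4$. A $k$-zigzag is a circular ordering of $P_k$ in which every induced subgraph isomorphic to $P_4$ (with the restricted circular ordering) is isomorphic to $Z$ or $Z^\ast$. *)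

theory Defs
  imports Main
begin

text \<open>A circularly ordered graph is given by a vertex set V, a symmetric irreflexive
adjacency E, and an injective position map pos into a linear order; the vertices
are placed clockwise on the circle in increasing order of pos.\<close>

text \<open>Small pattern graphs: vertices 0..m-1 listed clockwise (v1 = 0, v2 = 1, ...),
edges given as a list of pairs.\<close>
definition pat_adj :: "(nat \<times> nat) list \<Rightarrow> nat \<Rightarrow> nat \<Rightarrow> bool" where
  "pat_adj es i j \<longleftrightarrow> (i, j) \<in> set es \<or> (j, i) \<in> set es"

text \<open>The induced circularly ordered subgraph on S is isomorphic (as a circularly
ordered graph) to the pattern (m, es): listing S clockwise as xs, some rotation of
this listing maps adjacency exactly onto the pattern adjacency.\<close>
definition co_iso_pattern ::
  "('a \<Rightarrow> 'a \<Rightarrow> bool) \<Rightarrow> ('a \<Rightarrow> 'b::linorder) \<Rightarrow> 'a set \<Rightarrow> nat \<Rightarrow> (nat \<times> nat) list \<Rightarrow> bool" where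
  "co_iso_pattern E pos S m es \<longleftrightarrow>
     (\<exists>xs. distinct xs \<and> set xs = S \<and> length xs = m \<and>
           sorted_wrt (\<lambda>u v. pos u < pos v) xs \<and>
           (\<exists>r<m. \<forall>i<m. \<forall>j<m.
              E (xs ! ((i + r) mod m)) (xs ! ((j + r) mod m)) = pat_adj es i j))"

text \<open>The family LF (0-indexed: v1 = 0, ..., v4 = 3).\<close>
definition LF :: "(nat \<times> (nat \<times> nat) list) set" where
  "LF = {(3, [(0,1),(1,2),(2,0)]),
         (4, [(0,1),(1,2),(2,3),(3,0)]),
         (4, [(0,1),(1,3),(3,2),(2,0)]),
         (4, [(0,1),(1,2),(2,3)]),
         (4, [(2,0),(0,3),(3,1)]),
         (4, [(2,0),(2,1),(2,3)])}"

definition LF_free :: "'a set \<Rightarrow> ('a \<Rightarrow> 'a \<Rightarrow> bool) \<Rightarrow> ('a \<Rightarrow> 'b::linorder) \<Rightarrow> bool" where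
  "LF_free V E pos \<longleftrightarrow>
     \<not> (\<exists>S \<subseteq> V. \<exists>(m, es) \<in> LF. co_iso_pattern E pos S m es)"

definition Z_pat :: "(nat \<times> nat) list" where
  "Z_pat = [(0,1),(1,3),(3,2)]"

definition Zstar_pat :: "(nat \<times> nat) list" where
  "Zstar_pat = [(1,0),(0,2),(2,3)]"

definition induced_P4 :: "('a \<Rightarrow> 'a \<Rightarrow> bool) \<Rightarrow> 'a set \<Rightarrow> bool" where
  "induced_P4 E S \<longleftrightarrow>
     (\<exists>xs. distinct xs \<and> set xs = S \<and> length xs = 4 \<and>
           (\<forall>i<4. \<forall>j<4. E (xs ! i) (xs ! j) \<longleftrightarrow> (i + 1 = j \<or> j + 1 = i)))"

definition zigzag :: "'a set \<Rightarrow> ('a \<Rightarrow> 'a \<Rightarrow> bool) \<Rightarrow> ('a \<Rightarrow> 'b::linorder) \<Rightarrow> bool" where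
  "zigzag V E pos \<longleftrightarrow>
     (\<forall>S \<subseteq> V. induced_P4 E S \<longrightarrow>
        co_iso_pattern E pos S 4 Z_pat \<or> co_iso_pattern E pos S 4 Zstar_pat)"

definition path_adj :: "nat \<Rightarrow> nat \<Rightarrow> bool" where
  "path_adj i j \<longleftrightarrow> i + 1 = j \<or> j + 1 = i"

end

theory Submission imports Defs begin

lemma all4: "(\<forall>i<(4::nat). P i) \<longleftrightarrow> (P 0 \<and> P 1 \<and> P 2 \<and> P 3)"
  by (auto simp: less_Suc_eq eval_nat_numeral)
lemma ex4: "(\<exists>i<(4::nat). P i) \<longleftrightarrow> (P 0 \<or> P 1 \<or> P 2 \<or> P 3)"
  by (auto simp: less_Suc_eq eval_nat_numeral)
lemma all3: "(\<forall>i<(3::nat). P i) \<longleftrightarrow> (P 0 \<and> P 1 \<and> P 2)"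
  by (auto simp: less_Suc_eq eval_nat_numeral)
lemma ex3: "(\<exists>i<(3::nat). P i) \<longleftrightarrow> (P 0 \<or> P 1 \<or> P 2)"
  by (auto simp: less_Suc_eq eval_nat_numeral)

definition R4 :: "nat list \<Rightarrow> (nat \<times> nat) list \<Rightarrow> bool" where
  "R4 xs es \<longleftrightarrow> (\<exists>r<4. \<forall>i<4. \<forall>j<4.
     path_adj (xs ! ((i + r) mod 4)) (xs ! ((j + r) mod 4)) = pat_adj es i j)"

definition "bnd = [(0::nat,1::nat),(1,2),(2,3)]"
definition "crs = [(2::nat,0::nat),(0,3),(3,1)]"

lemma D1: "R4 [a,b,c,d] bnd \<Longrightarrow> R4 [a,b,c,d] Z_pat \<Longrightarrow> False"
  unfolding R4_def all4 ex4 by (auto simp: pat_adj_def bnd_def Z_pat_def)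
lemma D2: "R4 [a,b,c,d] bnd \<Longrightarrow> R4 [a,b,c,d] Zstar_pat \<Longrightarrow> False"
  unfolding R4_def all4 ex4 by (auto simp: pat_adj_def bnd_def Zstar_pat_def)
lemma D3: "R4 [a,b,c,d] crs \<Longrightarrow> R4 [a,b,c,d] Z_pat \<Longrightarrow> False"
  unfolding R4_def all4 ex4 by (auto simp: pat_adj_def crs_def Z_pat_def)
lemma D4: "R4 [a,b,c,d] crs \<Longrightarrow> R4 [a,b,c,d] Zstar_pat \<Longrightarrow> False"
  unfolding R4_def all4 ex4 by (auto simp: pat_adj_def crs_def Zstar_pat_def)

lemma lt4: "(a::nat) < 4 \<longleftrightarrow> a = 0 \<or> a = 1 \<or> a = 2 \<or> a = 3" by auto


lemma F: "a < 4 \<Longrightarrow> b < 4 \<Longrightarrow> c < 4 \<Longrightarrow> d < 4 \<Longrightarrow> distinct [a,b,c,d] \<Longrightarrow>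
  R4 [a,b,c,d] bnd \<or> R4 [a,b,c,d] crs \<or> R4 [a,b,c,d] Z_pat \<or> R4 [a,b,c,d] Zstar_pat"
  unfolding lt4
  apply (elim disjE)
  apply (simp_all only: distinct.simps list.set insert_iff empty_iff simp_thms refl zero_neq_one one_neq_zero numeral_One[symmetric] numeral_eq_iff num.simps)
  apply (simp_all add: R4_def all4 ex4 pat_adj_def bnd_def crs_def Z_pat_def Zstar_pat_def path_adj_def)
  done

lemma len4: "length xs = 4 \<Longrightarrow> \<exists>a b c d. xs = [a,b,c,d]"
  by (auto simp add: eval_nat_numeral length_Suc_conv)
lemma len3: "length xs = 3 \<Longrightarrow> \<exists>a b c. xs = [a,b,c]"
  by (auto simp add: eval_nat_numeral length_Suc_conv)

lemma shift: "R4 [n+a,n+b,n+c,n+d] es = R4 [a,b,c,d] es"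
  unfolding R4_def all4 ex4 by (simp add: path_adj_def)

lemma uniq:
  assumes "inj_on pos S" "distinct xs" "distinct ys" "set xs = S" "set ys = S"
    "sorted_wrt (\<lambda>u v. (pos u :: nat) < pos v) xs" "sorted_wrt (\<lambda>u v. pos u < pos v) ys"
  shows "xs = ys"
proof -
  have "sorted_wrt (<) (map pos xs)" "sorted_wrt (<) (map pos ys)"
    using assms(6,7) by (simp_all add: sorted_wrt_map)
  then have "map pos xs = map pos ys"
    using assms(4,5) by (metis list.set_map sorted_distinct_set_unique strict_sorted_iff)
  then show ?thesis using assms(1,4,5) by (simp add: inj_on_map_eq_map)
qed

lemma exsorted:
  assumes "finite (S::nat set)" "inj_on pos S"
  shows "\<exists>ys. distinct ys \<and> set ys = S \<and> length ys = card S \<and> sorted_wrt (\<lambda>u v. (pos u :: nat) < pos v) ys"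
proof -
  define ys where "ys = sort_key pos (sorted_list_of_set S)"
  have d: "distinct ys" "set ys = S" using assms by (simp_all add: ys_def)
  have "sorted (map pos ys)" by (simp add: ys_def)
  moreover have "distinct (map pos ys)" using d assms(2) by (simp add: distinct_map)
  ultimately have "sorted_wrt (<) (map pos ys)" by (simp add: strict_sorted_iff)
  then have "sorted_wrt (\<lambda>u v. pos u < pos v) ys" by (simp add: sorted_wrt_map)
  with d show ?thesis by (metis distinct_card)
qed

lemma P4cons:
  assumes "induced_P4 path_adj S" shows "\<exists>n. S = {n, n+1, n+2, n+3}"
proof -
  obtain xs where xs: "distinct xs" "set xs = S" "length xs = 4"
    "\<forall>i<4. \<forall>j<4. path_adj (xs ! i) (xs ! j) \<longleftrightarrow> (i + 1 = j \<or> j + 1 = i)"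
    using assms unfolding induced_P4_def by blast
  obtain a b c d where e: "xs = [a,b,c,d]" using len4[OF xs(3)] by blast
  have h: "path_adj a b" "path_adj b c" "path_adj c d" "distinct [a,b,c,d]"
    using xs(4) xs(1) unfolding all4 e by simp_all
  show ?thesis
  proof (cases "b = a + 1")
    case True
    then have "c = a + 2" "d = a + 3" using h by (auto simp: path_adj_def)
    then show ?thesis using True xs(2) e by auto
  next
    case False
    then have "a = d + 3" "b = d + 2" "c = d + 1" using h by (auto simp: path_adj_def)
    then show ?thesis using xs(2) e by auto
  qed
qed

lemma ip4:
  assumes "distinct [a,b,c,d]" "R4 [a,b,c,d] bnd \<or> R4 [a,b,c,d] crs"
  shows "induced_P4 path_adj {a,b,c,d}"
  using assms unfolding R4_def ex4 induced_P4_def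
  apply (elim disjE)
  subgoal apply (rule exI[of _ "[a,b,c,d]"]) by (auto simp: all4 pat_adj_def bnd_def)
  subgoal apply (rule exI[of _ "[b,c,d,a]"]) by (auto simp: all4 pat_adj_def bnd_def)
  subgoal apply (rule exI[of _ "[c,d,a,b]"]) by (auto simp: all4 pat_adj_def bnd_def)
  subgoal apply (rule exI[of _ "[d,a,b,c]"]) by (auto simp: all4 pat_adj_def bnd_def)
  subgoal apply (rule exI[of _ "[c,a,d,b]"]) by (auto simp: all4 pat_adj_def crs_def)
  subgoal apply (rule exI[of _ "[d,b,a,c]"]) by (auto simp: all4 pat_adj_def crs_def)
  subgoal apply (rule exI[of _ "[a,c,b,d]"]) by (auto simp: all4 pat_adj_def crs_def)
  subgoal apply (rule exI[of _ "[b,d,c,a]"]) by (auto simp: all4 pat_adj_def crs_def)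
  done

lemma co_R4: "co_iso_pattern path_adj pos S 4 es \<longleftrightarrow>
  (\<exists>xs. distinct xs \<and> set xs = S \<and> length xs = 4 \<and> sorted_wrt (\<lambda>u v. pos u < pos v) xs \<and> R4 xs es)"
  unfolding co_iso_pattern_def R4_def by simp


lemma no_tri: "\<not> co_iso_pattern path_adj pos S 3 [(0,1),(1,2),(2,0)]"
proof
  assume "co_iso_pattern path_adj pos S 3 [(0,1),(1,2),(2,0)]"
  then obtain xs r where xs: "distinct xs" "length xs = 3" "r < 3"
    "\<forall>i<3. \<forall>j<3. path_adj (xs ! ((i + r) mod 3)) (xs ! ((j + r) mod 3)) = pat_adj [(0,1),(1,2),(2,0)] i j"
    unfolding co_iso_pattern_def by blast
  obtain a b c where e: "xs = [a,b,c]" using len3[OF xs(2)] by blast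
  have "path_adj a b \<and> path_adj b c \<and> path_adj a c"
  proof -
    have "r = 0 \<or> r = 1 \<or> r = 2" using xs(3) by auto
    then show ?thesis using xs(4) unfolding e all3 by (elim disjE) (simp_all add: pat_adj_def)
  qed
  then show False using xs(1) e by (auto simp: path_adj_def)
qed

lemma cyc: "path_adj u v \<Longrightarrow> path_adj v w \<Longrightarrow> path_adj w x \<Longrightarrow> path_adj x u \<Longrightarrow>
  u \<noteq> w \<Longrightarrow> v \<noteq> x \<Longrightarrow> False"
  by (auto simp: path_adj_def)

lemma cen: "path_adj c u \<Longrightarrow> path_adj c v \<Longrightarrow> path_adj c w \<Longrightarrow> u \<noteq> v \<Longrightarrow> u \<noteq> w \<Longrightarrow> v \<noteq> w \<Longrightarrow> False"
  by (auto simp: path_adj_def)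

lemma no_c4: "distinct [a,b,c,d] \<Longrightarrow> \<not> R4 [a,b,c,d] [(0,1),(1,3),(3,2),(2,0)]"
  unfolding R4_def all4 ex4
  apply (intro notI)
  apply (simp add: pat_adj_def)
  apply (elim disjE conjE)
  apply (metis cyc)+
  done

lemma no_c4b: "distinct [a,b,c,d] \<Longrightarrow> \<not> R4 [a,b,c,d] [(0,1),(1,2),(2,3),(3,0)]"
  unfolding R4_def all4 ex4
  apply (intro notI)
  apply (simp add: pat_adj_def)
  apply (elim disjE conjE)
  apply (metis cyc)+
  done

lemma no_k13: "distinct [a,b,c,d] \<Longrightarrow> \<not> R4 [a,b,c,d] [(2,0),(2,1),(2,3)]"
  unfolding R4_def all4 ex4
  apply (intro notI)
  apply (simp add: pat_adj_def)
  apply (elim disjE conjE)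
  apply (metis cen)+
  done

lemma R4_any: assumes "co_iso_pattern path_adj pos S 4 es"
  "\<And>a b c d. distinct [a,b,c,d] \<Longrightarrow> \<not> R4 [a,b,c,d] es" shows False
proof -
  obtain xs where xs: "distinct xs" "length xs = 4" "R4 xs es" using assms(1) co_R4 by blast
  obtain a b c d where e: "xs = [a,b,c,d]" using len4[OF xs(2)] by blast
  show False using assms(2)[of a b c d] xs e by simp
qed

theorem mainTheorem12:
  fixes k :: nat and pos :: "nat \<Rightarrow> nat"
  assumes "k \<ge> 4"
    and "inj_on pos {0..<k}"
  shows "LF_free {0..<k} path_adj pos \<longleftrightarrow> zigzag {0..<k} path_adj pos"
proof
  assume L: "LF_free {0..<k} path_adj pos"
  show "zigzag {0..<k} path_adj pos" unfolding zigzag_def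
  proof (intro allI impI)
    fix S assume S: "S \<subseteq> {0..<k}" "induced_P4 path_adj S"
    obtain n where Sn: "S = {n, n+1, n+2, n+3}" using P4cons[OF S(2)] by blast
    have inj: "inj_on pos S" using assms(2) S(1) inj_on_subset by blast
    have cS: "card S = 4" "finite S" using Sn by auto
    obtain ys where ys: "distinct ys" "set ys = S" "length ys = card S"
      "sorted_wrt (\<lambda>u v. pos u < pos v) ys"
      using exsorted[OF cS(2) inj] by metis
    note ys = ys(1,2) ys(3)[unfolded cS(1)] ys(4)
    obtain y0 y1 y2 y3 where e: "ys = [y0,y1,y2,y3]" using len4[OF ys(3)] by blast
    have yin: "y0 \<in> S" "y1 \<in> S" "y2 \<in> S" "y3 \<in> S" using ys(2) e by auto
    define a0 where "a0 = y0 - n"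
    define a1 where "a1 = y1 - n"
    define a2 where "a2 = y2 - n"
    define a3 where "a3 = y3 - n"
    have m: "y \<in> S \<Longrightarrow> y = n + (y - n) \<and> y - n < 4" for y using Sn by auto
    have ys': "ys = [n+a0,n+a1,n+a2,n+a3]" and lt: "a0 < 4" "a1 < 4" "a2 < 4" "a3 < 4"
      using m[OF yin(1)] m[OF yin(2)] m[OF yin(3)] m[OF yin(4)] e
      unfolding a0_def a1_def a2_def a3_def by simp_all
    have "distinct [a0,a1,a2,a3]" using ys(1) unfolding ys' by simp
    from F[OF lt this]
    have D: "R4 ys bnd \<or> R4 ys crs \<or> R4 ys Z_pat \<or> R4 ys Zstar_pat"
      unfolding ys' shift .
    have nb: "\<not> R4 ys bnd"
    proof
      assume "R4 ys bnd"
      then have "co_iso_pattern path_adj pos S 4 bnd" using ys co_R4 by blast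
      moreover have "(4, bnd) \<in> LF" by (simp add: LF_def bnd_def)
      ultimately show False using L S(1) unfolding LF_free_def by blast
    qed
    have nc: "\<not> R4 ys crs"
    proof
      assume "R4 ys crs"
      then have "co_iso_pattern path_adj pos S 4 crs" using ys co_R4 by blast
      moreover have "(4, crs) \<in> LF" by (simp add: LF_def crs_def)
      ultimately show False using L S(1) unfolding LF_free_def by blast
    qed
    show "co_iso_pattern path_adj pos S 4 Z_pat \<or> co_iso_pattern path_adj pos S 4 Zstar_pat"
      using D nb nc ys co_R4 by blast
  qed
next
  assume Z: "zigzag {0..<k} path_adj pos"
  show "LF_free {0..<k} path_adj pos" unfolding LF_free_def
  proof
    assume "\<exists>S\<subseteq>{0..<k}. \<exists>(m, es)\<in>LF. co_iso_pattern path_adj pos S m es"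
    then obtain S m es where S: "S \<subseteq> {0..<k}" "(m, es) \<in> LF" "co_iso_pattern path_adj pos S m es"
      by blast
    have inj: "inj_on pos S" using assms(2) S(1) inj_on_subset by blast
    have P4case: False if m4: "m = 4" and es: "es = bnd \<or> es = crs"
    proof -
      obtain xs where xs: "distinct xs" "set xs = S" "length xs = 4"
        "sorted_wrt (\<lambda>u v. pos u < pos v) xs" "R4 xs es"
        using S(3) m4 co_R4 by blast
      obtain a b c d where e: "xs = [a,b,c,d]" using len4[OF xs(3)] by blast
      have "induced_P4 path_adj S" using ip4[of a b c d] xs(1,2,5) e es by auto
      then have "co_iso_pattern path_adj pos S 4 Z_pat \<or> co_iso_pattern path_adj pos S 4 Zstar_pat"
        using Z S(1) unfolding zigzag_def by blast
      then obtain ys es' where ys: "distinct ys" "set ys = S" "length ys = 4"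
        "sorted_wrt (\<lambda>u v. pos u < pos v) ys" "R4 ys es'" and es': "es' = Z_pat \<or> es' = Zstar_pat"
        using co_R4 by blast
      have "ys = xs" using uniq[OF inj ys(1) xs(1) ys(2) xs(2) ys(4) xs(4)] .
      then show False using ys(5) xs(5) e es es' D1 D2 D3 D4 by blast
    qed
    from S(2) show False unfolding LF_def
    proof (elim insertE)
      assume "(m, es) = (3, [(0,1),(1,2),(2,0)])"
      then show False using S(3) no_tri by (metis prod.inject)
    next
      assume "(m, es) = (4, [(0,1),(1,2),(2,3),(3,0)])"
      then show False using R4_any[OF _ no_c4b] S(3) by auto
    next
      assume "(m, es) = (4, [(0,1),(1,3),(3,2),(2,0)])"
      then show False using R4_any[OF _ no_c4] S(3) by auto
    next
      assume "(m, es) = (4, [(0,1),(1,2),(2,3)])"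
      then show False using P4case by (simp add: bnd_def)
    next
      assume "(m, es) = (4, [(2,0),(0,3),(3,1)])"
      then show False using P4case by (simp add: crs_def)
    next
      assume "(m, es) = (4, [(2,0),(2,1),(2,3)])"
      then show False using R4_any[OF _ no_k13] S(3) by auto
    next
      assume "(m, es) \<in> {}" then show False by simp
    qed
  qed
qed

end
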